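(* Let $\lambda_1,\ldots,\lambda_L>0$ and consider the convex program $$\min_{\{\hat\lambda_\ell,\gamma_\ell\}}\ \frac12\sum_{\ell=1}^L\log\frac{\lambda_\ell}{\gamma_\ell}\ \text{ s.t. } 0<\gamma_\ell\le\lambda_\ell,\ 0\le\hat\lambda_\ell,\ \sum_{\ell}D_\ell(\gamma_\ell,\hat\lambda_\ell)\le D,\ \sum_\ell P_\ell(\hat\lambda_\ell)\le P,$$ with $D_\ell(\gamma_\ell,\hat\lambda_\ell)=\lambda_\ell-2\sqrt{\hat\lambda_\ell(\lambda_\ell-\gamma_\ell)}+\hat\lambda_\ell$ and $P_\ell(\hat\lambda_\ell)=(\sqrt{\lambda_\ell}-\sqrt{\hat\lambda_\ell})^2$. Let $(D,P)$ be strictly feasible. Then the optimal solution $\{\gamma^*_\ell(D,P),\hat\lambda^*_\ell(D,P)\}$ is as follows: (1) If both the distortion and perception constraints are active, then there exist $\nu_1,\nu_2>0$ such that, for every $\ell$, $$\gamma^*_\ell(D,P)=\frac{\theta_\ell}{2\nu_1},\qquad \hat\lambda^*_\ell(D,P)=\frac{\lambda_\ell}{\big(1+\frac{(1-\theta_\ell)\nu_1}{\nu_2}\big)^2},$$ where $\theta_\ell$ is the unique solution of $\frac{\theta_\ell}{1+\frac{(1-\theta_\ell)\nu_1}{\nu_2}}=\sqrt{1-\frac{\theta_\ell}{2\nu_1\lambda_\ell}}$, and $\nu_1,\nu_2$ are such that $\sum_\ell D_\ell(\gamma^*_\ell(D,P),\hat\lambda^*_\ell(D,P))=D$ and $\sum_\ell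 P_\ell(\hat\lambda^*_\ell(D,P))=P$. In this case every component has positive rate, i.e., $\gamma^*_\ell(D,P)<\lambda_\ell$ for all $\ell$. (2) If the distortion constraint is active but the perception constraint is inactive, then there exists $\nu_1>0$ with $\sum_{\ell}[\lambda_\ell-\frac{1}{2\nu_1}]^+=[\sum_\ell\lambda_\ell-D]^+$ such that $\gamma^*_\ell(D,P)=\min\{\frac{1}{2\nu_1},\lambda_\ell\}$ and $\hat\lambda^*_\ell(D,P)=\lambda_\ell-\min\{\frac{1}{2\nu_1},\lambda_\ell\}$. (3) If the distortion constraint is inactive, then $\gamma^*_\ell(D,P)=\lambda_\ell$ for all $\ell$ (every component has zero rate), and $(\hat\lambda^*_\ell(D,P))_\ell$ can be any vector in the set $\{(\hat\lambda_\ell)_\ell:\ \sum_\ell P_\ell(\hat\lambda_\ell)\le P,\ \sum_\ell(\lambda_\ell+\hat\lambda_\ell)\le D,\ \hat\lambda_\ell\ge0\}$.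
   Context: This program equals the rate-distortion-perception function of an $L$-dimensional zero-mean Gaussian vector source with covariance eigenvalues $\lambda_\ell$, squared-error distortion and squared Wasserstein-2 perception loss; the rate of component $\ell$ is $\frac12\log\frac{\lambda_\ell}{\gamma_\ell}$. $[x]^+=\max\{0,x\}$; logs are natural. $(D,P)$ strictly feasible means there is a feasible point satisfying the distortion and perception constraints with strict inequality. A constraint is inactive if the program with that constraint removed (all others kept) has at least one optimal solution satisfying all the original constraints; otherwise it is active. *)

theory Defs
  imports Complex_Main
begin

text \<open>Components are indexed by a finite (nonempty) type 'n, standing for {1..L}.
  A candidate point of the program is a pair (g, lh) of functions 'n => real,
  g l = gamma_l and lh l = hat-lambda_l.\<close>

definition Dl :: "real \<Rightarrow> real \<Rightarrow> real \<Rightarrow> real" where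
  "Dl lam g lh = lam - 2 * sqrt (lh * (lam - g)) + lh"

definition Pl :: "real \<Rightarrow> real \<Rightarrow> real" where
  "Pl lam lh = (sqrt lam - sqrt lh)\<^sup>2"

definition rate_obj :: "('n::finite \<Rightarrow> real) \<Rightarrow> ('n \<Rightarrow> real) \<Rightarrow> real" where
  "rate_obj lam g = (1/2) * (\<Sum>l\<in>UNIV. ln (lam l / g l))"

definition totD :: "('n::finite \<Rightarrow> real) \<Rightarrow> ('n \<Rightarrow> real) \<Rightarrow> ('n \<Rightarrow> real) \<Rightarrow> real" where
  "totD lam g lh = (\<Sum>l\<in>UNIV. Dl (lam l) (g l) (lh l))"

definition totP :: "('n::finite \<Rightarrow> real) \<Rightarrow> ('n \<Rightarrow> real) \<Rightarrow> real" where
  "totP lam lh = (\<Sum>l\<in>UNIV. Pl (lam l) (lh l))"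

definition box_ok :: "('n::finite \<Rightarrow> real) \<Rightarrow> ('n \<Rightarrow> real) \<Rightarrow> ('n \<Rightarrow> real) \<Rightarrow> bool" where
  "box_ok lam g lh \<longleftrightarrow> (\<forall>l. 0 < g l \<and> g l \<le> lam l \<and> 0 \<le> lh l)"

definition feasible :: "('n::finite \<Rightarrow> real) \<Rightarrow> real \<Rightarrow> real \<Rightarrow> ('n \<Rightarrow> real) \<Rightarrow> ('n \<Rightarrow> real) \<Rightarrow> bool" where
  "feasible lam D P g lh \<longleftrightarrow> box_ok lam g lh \<and> totD lam g lh \<le> D \<and> totP lam lh \<le> P"

definition strictly_feasible :: "('n::finite \<Rightarrow> real) \<Rightarrow> real \<Rightarrow> real \<Rightarrow> bool" where
  "strictly_feasible lam D P \<longleftrightarrow>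
     (\<exists>g lh. box_ok lam g lh \<and> totD lam g lh < D \<and> totP lam lh < P)"

definition optimal :: "('n::finite \<Rightarrow> real) \<Rightarrow> real \<Rightarrow> real \<Rightarrow> ('n \<Rightarrow> real) \<Rightarrow> ('n \<Rightarrow> real) \<Rightarrow> bool" where
  "optimal lam D P g lh \<longleftrightarrow> feasible lam D P g lh \<and>
     (\<forall>g' lh'. feasible lam D P g' lh' \<longrightarrow> rate_obj lam g \<le> rate_obj lam g')"

definition feasible_noD :: "('n::finite \<Rightarrow> real) \<Rightarrow> real \<Rightarrow> ('n \<Rightarrow> real) \<Rightarrow> ('n \<Rightarrow> real) \<Rightarrow> bool" where
  "feasible_noD lam P g lh \<longleftrightarrow> box_ok lam g lh \<and> totP lam lh \<le> P"

definition optimal_noD :: "('n::finite \<Rightarrow> real) \<Rightarrow> real \<Rightarrow> ('n \<Rightarrow> real) \<Rightarrow> ('n \<Rightarrow> real) \<Rightarrow> bool" where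
  "optimal_noD lam P g lh \<longleftrightarrow> feasible_noD lam P g lh \<and>
     (\<forall>g' lh'. feasible_noD lam P g' lh' \<longrightarrow> rate_obj lam g \<le> rate_obj lam g')"

definition feasible_noP :: "('n::finite \<Rightarrow> real) \<Rightarrow> real \<Rightarrow> ('n \<Rightarrow> real) \<Rightarrow> ('n \<Rightarrow> real) \<Rightarrow> bool" where
  "feasible_noP lam D g lh \<longleftrightarrow> box_ok lam g lh \<and> totD lam g lh \<le> D"

definition optimal_noP :: "('n::finite \<Rightarrow> real) \<Rightarrow> real \<Rightarrow> ('n \<Rightarrow> real) \<Rightarrow> ('n \<Rightarrow> real) \<Rightarrow> bool" where
  "optimal_noP lam D g lh \<longleftrightarrow> feasible_noP lam D g lh \<and>
     (\<forall>g' lh'. feasible_noP lam D g' lh' \<longrightarrow> rate_obj lam g \<le> rate_obj lam g')"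

text \<open>A constraint is inactive if the program with that constraint removed has an optimal
  solution satisfying all the original constraints; otherwise it is active.\<close>
definition D_inactive :: "('n::finite \<Rightarrow> real) \<Rightarrow> real \<Rightarrow> real \<Rightarrow> bool" where
  "D_inactive lam D P \<longleftrightarrow> (\<exists>g lh. optimal_noD lam P g lh \<and> feasible lam D P g lh)"

definition P_inactive :: "('n::finite \<Rightarrow> real) \<Rightarrow> real \<Rightarrow> real \<Rightarrow> bool" where
  "P_inactive lam D P \<longleftrightarrow> (\<exists>g lh. optimal_noP lam D g lh \<and> feasible lam D P g lh)"

text \<open>The defining equation of theta_l, on the natural domain where the square root
  argument is nonnegative and the denominator is nonzero.\<close>
definition theta_eq :: "real \<Rightarrow> real \<Rightarrow> real \<Rightarrow> real \<Rightarrow> bool" where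
  "theta_eq nu1 nu2 lam \<theta> \<longleftrightarrow>
     \<theta> \<le> 2 * nu1 * lam \<and> 1 + (1 - \<theta>) * nu1 / nu2 \<noteq> 0 \<and>
     \<theta> / (1 + (1 - \<theta>) * nu1 / nu2) = sqrt (1 - \<theta> / (2 * nu1 * lam))"

definition pos_part :: "real \<Rightarrow> real" where
  "pos_part x = max 0 x"

end

theory Submission
  imports Defs "HOL-Analysis.Analysis"
begin


lemma Dl_eq:
  assumes "0 \<le> lh" "g \<le> lam"
  shows "Dl lam g lh = g + (sqrt lh - sqrt (lam - g))\<^sup>2"
proof -
  have "sqrt (lh * (lam - g)) = sqrt lh * sqrt (lam - g)" by (simp add: real_sqrt_mult)
  moreover have "(sqrt lh)\<^sup>2 = lh" "(sqrt (lam - g))\<^sup>2 = lam - g" using assms by auto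
  ultimately show ?thesis unfolding Dl_def power2_diff by (simp add: algebra_simps)
qed

lemma Dl_ge: "0 \<le> lh \<Longrightarrow> g \<le> lam \<Longrightarrow> g \<le> Dl lam g lh"
  using Dl_eq by fastforce

lemma sqrt_concave2:
  fixes x1 y1 x2 y2 a b :: real
  assumes "0 \<le> x1" "0 \<le> y1" "0 \<le> x2" "0 \<le> y2" "0 \<le> a" "0 \<le> b"
  shows "a * sqrt (x1 * y1) + b * sqrt (x2 * y2) \<le> sqrt ((a*x1 + b*x2) * (a*y1 + b*y2))"
proof -
  have am: "2 * (sqrt (x1*y2) * sqrt (x2*y1)) \<le> x1*y2 + x2*y1"
  proof -
    have "0 \<le> (sqrt (x1*y2) - sqrt (x2*y1))\<^sup>2" by simp
    moreover have "(sqrt (x1*y2))\<^sup>2 = x1*y2" "(sqrt (x2*y1))\<^sup>2 = x2*y1" using assms by auto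
    ultimately show ?thesis unfolding power2_diff by linarith
  qed
  have e: "sqrt (x1 * y1) * sqrt (x2 * y2) = sqrt (x1*y2) * sqrt (x2*y1)"
    by (simp add: real_sqrt_mult[symmetric] algebra_simps)
  have l0: "0 \<le> a * sqrt (x1 * y1) + b * sqrt (x2 * y2)" using assms by simp
  have "(a * sqrt (x1 * y1) + b * sqrt (x2 * y2))\<^sup>2
        = a^2 * (x1*y1) + b^2*(x2*y2) + 2*a*b*(sqrt (x1 * y1) * sqrt (x2 * y2))"
    using assms by (simp add: power2_sum power_mult_distrib)
  also have "\<dots> \<le> a^2 * (x1*y1) + b^2*(x2*y2) + a*b*(x1*y2 + x2*y1)"
    using am e assms mult_left_mono[OF am, of "a*b"] by (simp add: algebra_simps)
  also have "\<dots> = (a*x1 + b*x2) * (a*y1 + b*y2)" by (simp add: algebra_simps power2_eq_square)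
  finally show ?thesis using l0 by (simp add: real_le_rsqrt)
qed

lemma ln_conc:
  fixes x y a b :: real
  assumes "0 < x" "0 < y" "0 \<le> a" "0 \<le> b" "a + b = 1"
  shows "a * ln x + b * ln y \<le> ln (a*x + b*y)"
  using ln_concave assms unfolding concave_on_iff by auto



lemma Dl_conv:
  assumes "0 \<le> lh1" "0 \<le> lh2" "g1 \<le> lam" "g2 \<le> lam" "0 \<le> a" "0 \<le> b" "a + b = 1"
  shows "Dl lam (a*g1 + b*g2) (a*lh1 + b*lh2) \<le> a * Dl lam g1 lh1 + b * Dl lam g2 lh2"
proof -
  have e0: "a*(lam - g1) + b*(lam - g2) = (a+b)*lam - (a*g1 + b*g2)" by (simp add: algebra_simps)
  have e: "lam - (a*g1 + b*g2) = a*(lam - g1) + b*(lam - g2)" using e0 assms(7) by simp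
  have "a * sqrt (lh1 * (lam - g1)) + b * sqrt (lh2 * (lam - g2))
        \<le> sqrt ((a*lh1 + b*lh2) * (a*(lam - g1) + b*(lam - g2)))"
    by (rule sqrt_concave2) (use assms in auto)
  then have "a * sqrt (lh1 * (lam - g1)) + b * sqrt (lh2 * (lam - g2))
        \<le> sqrt ((a*lh1 + b*lh2) * (lam - (a*g1 + b*g2)))" using e by simp
  moreover have "lam = a * lam + b * lam" using assms(7) by (simp add: distrib_right[symmetric])
  ultimately show ?thesis unfolding Dl_def by (simp add: algebra_simps)
qed

lemma Pl_conv:
  assumes "0 \<le> lh1" "0 \<le> lh2" "0 \<le> lam" "0 \<le> a" "0 \<le> b" "a + b = 1"
  shows "Pl lam (a*lh1 + b*lh2) \<le> a * Pl lam lh1 + b * Pl lam lh2"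
proof -
  have *: "Pl lam x = lam - 2 * sqrt lam * sqrt x + x" if "0 \<le> x" for x
    using that assms by (simp add: Pl_def power2_diff)
  have "a * sqrt (lh1 * 1) + b * sqrt (lh2 * 1) \<le> sqrt ((a*lh1 + b*lh2) * (a*1 + b*1))"
    by (rule sqrt_concave2) (use assms in auto)
  then have c: "a * sqrt lh1 + b * sqrt lh2 \<le> sqrt (a*lh1 + b*lh2)" using assms by simp
  have "sqrt lam * (a * sqrt lh1 + b * sqrt lh2) \<le> sqrt lam * sqrt (a*lh1 + b*lh2)"
    by (rule mult_left_mono) (use c assms in auto)
  moreover have "lam = a * lam + b * lam" using assms(6) by (simp add: distrib_right[symmetric])
  ultimately show ?thesis using assms by (simp add: * algebra_simps)
qed

lemma rate_term_conv:
  fixes g1 g2 lam a b :: real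
  assumes "0 < g1" "0 < g2" "0 < lam" "0 \<le> a" "0 \<le> b" "a + b = 1"
  shows "ln (lam / (a*g1 + b*g2)) \<le> a * ln (lam / g1) + b * ln (lam / g2)"
proof -
  have p: "0 < a*g1 + b*g2"
  proof (cases "a = 0")
    case True then show ?thesis using assms by simp
  next
    case False
    then have "0 < a" using assms(4) by (auto simp: less_le)
    then have "0 < a*g1" using assms by simp
    moreover have "0 \<le> b*g2" using assms by simp
    ultimately show ?thesis by simp
  qed
  have "a * ln g1 + b * ln g2 \<le> ln (a*g1 + b*g2)" using ln_conc assms by blast
  moreover have "ln lam = a * ln lam + b * ln lam" using assms(6) by (simp add: distrib_right[symmetric])
  ultimately show ?thesis using assms p by (simp add: ln_div algebra_simps)
qed

lemma comb:
  fixes lam g1 lh1 g2 lh2 :: "'n::finite \<Rightarrow> real"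
  assumes lp: "\<forall>l. 0 < lam l" and b1: "box_ok lam g1 lh1" and b2: "box_ok lam g2 lh2"
    and ab: "0 \<le> a" "0 \<le> b" "a + b = 1"
  shows "box_ok lam (\<lambda>l. a * g1 l + b * g2 l) (\<lambda>l. a * lh1 l + b * lh2 l)"
    "totD lam (\<lambda>l. a * g1 l + b * g2 l) (\<lambda>l. a * lh1 l + b * lh2 l) \<le> a * totD lam g1 lh1 + b * totD lam g2 lh2"
    "totP lam (\<lambda>l. a * lh1 l + b * lh2 l) \<le> a * totP lam lh1 + b * totP lam lh2"
    "rate_obj lam (\<lambda>l. a * g1 l + b * g2 l) \<le> a * rate_obj lam g1 + b * rate_obj lam g2"
proof -
  show "box_ok lam (\<lambda>l. a * g1 l + b * g2 l) (\<lambda>l. a * lh1 l + b * lh2 l)"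
    unfolding box_ok_def
  proof
    fix l
    have h: "0 < g1 l" "g1 l \<le> lam l" "0 \<le> lh1 l" "0 < g2 l" "g2 l \<le> lam l" "0 \<le> lh2 l"
      using b1 b2 unfolding box_ok_def by auto
    have "0 < a * g1 l + b * g2 l"
    proof (cases "a = 0")
      case True then show ?thesis using ab h by simp
    next
      case False
      then have "0 < a*g1 l" using ab h by simp
      moreover have "0 \<le> b*g2 l" using ab h by simp
      ultimately show ?thesis by simp
    qed
    moreover have "a * g1 l + b * g2 l \<le> a * lam l + b * lam l"
      using h ab by (simp add: add_mono mult_left_mono)
    moreover have "a * lam l + b * lam l = lam l" using ab(3) by (simp add: distrib_right[symmetric])
    ultimately show "0 < a * g1 l + b * g2 l \<and> a * g1 l + b * g2 l \<le> lam l \<and> 0 \<le> a * lh1 l + b * lh2 l"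
      using h ab by simp
  qed
  have h: "\<And>l. 0 < g1 l \<and> g1 l \<le> lam l \<and> 0 \<le> lh1 l \<and> 0 < g2 l \<and> g2 l \<le> lam l \<and> 0 \<le> lh2 l"
    using b1 b2 unfolding box_ok_def by auto
  show "totD lam (\<lambda>l. a * g1 l + b * g2 l) (\<lambda>l. a * lh1 l + b * lh2 l) \<le> a * totD lam g1 lh1 + b * totD lam g2 lh2"
    unfolding totD_def sum_distrib_left sum.distrib[symmetric]
    by (rule sum_mono) (rule Dl_conv, use h ab in auto)
  have lp': "\<And>l. 0 \<le> lam l" using lp less_imp_le by blast
  show "totP lam (\<lambda>l. a * lh1 l + b * lh2 l) \<le> a * totP lam lh1 + b * totP lam lh2"
    unfolding totP_def sum_distrib_left sum.distrib[symmetric]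
    by (rule sum_mono) (rule Pl_conv, use h ab lp' in auto)
  have "(\<Sum>l\<in>UNIV. ln (lam l / (a * g1 l + b * g2 l))) \<le> a * (\<Sum>l\<in>UNIV. ln (lam l / g1 l)) + b * (\<Sum>l\<in>UNIV. ln (lam l / g2 l))"
    unfolding sum_distrib_left sum.distrib[symmetric]
    by (rule sum_mono) (rule rate_term_conv, use h ab lp in auto)
  then show "rate_obj lam (\<lambda>l. a * g1 l + b * g2 l) \<le> a * rate_obj lam g1 + b * rate_obj lam g2"
    unfolding rate_obj_def by (simp add: algebra_simps)
qed



lemma nonneg_coef:
  fixes X b c :: real
  assumes "\<forall>k\<ge>0. b \<le> X + c * k"
  shows "0 \<le> c"
proof (rule ccontr)
  assume "\<not> 0 \<le> c"
  then have c: "c < 0" by simp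
  define k where "k = (\<bar>X - b\<bar> + 1) / (- c)"
  have "0 \<le> k" using c unfolding k_def by (simp add: divide_nonneg_neg)
  then have "b \<le> X + c * k" using assms by blast
  moreover have "c * k = - (\<bar>X - b\<bar> + 1)" using c unfolding k_def by simp
  ultimately show False by linarith
qed

lemma limit_bound:
  fixes Y b c :: real
  assumes "\<forall>e>0. Y - c * e \<le> b"
  shows "Y \<le> b"
proof (rule ccontr)
  assume "\<not> Y \<le> b"
  then have Yb: "b < Y" by simp
  define e where "e = (Y - b) / (2 * (\<bar>c\<bar> + 1))"
  have e0: "0 < e" using Yb unfolding e_def by simp
  have "c * e \<le> \<bar>c\<bar> * e" using e0 by (simp add: mult_right_mono)
  also have "\<dots> < (\<bar>c\<bar> + 1) * e" using e0 by simp
  also have "(\<bar>c\<bar> + 1) * e = (Y - b) / 2"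
  proof -
    have "\<bar>c\<bar> + 1 > 0" by simp
    then show ?thesis unfolding e_def by (simp add: field_simps)
  qed
  finally have "c * e < (Y - b)/2" .
  moreover have "Y - c * e \<le> b" using assms e0 by blast
  ultimately have "Y - b < (Y - b) / 2" by linarith
  then show False using Yb by (simp add: field_simps)
qed

lemma comb_lt:
  fixes a b x y c :: real
  assumes "0 \<le> a" "0 \<le> b" "a + b = 1" "x < c" "y < c"
  shows "a * x + b * y < c"
proof (cases "a = 0")
  case True then show ?thesis using assms by simp
next
  case False
  then have "0 < a" using assms(1) by (auto simp: less_le)
  then have "a * x < a * c" using assms by simp
  moreover have "b * y \<le> b * c" using assms by (simp add: mult_left_mono)
  moreover have "a * c + b * c = c" using assms(3) by (simp add: distrib_right[symmetric])
  ultimately show ?thesis by linarith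
qed

lemma lagrange:
  fixes lam g lh :: "'n::finite \<Rightarrow> real"
  assumes lp: "\<forall>l. 0 < lam l" and sf: "strictly_feasible lam D P" and opt: "optimal lam D P g lh"
  shows "\<exists>n1 n2. 0 \<le> n1 \<and> 0 \<le> n2 \<and> (\<forall>g' lh'. box_ok lam g' lh' \<longrightarrow>
     rate_obj lam g \<le> rate_obj lam g' + n1 * (totD lam g' lh' - D) + n2 * (totP lam lh' - P))"
proof -
  define p where "p = rate_obj lam g"
  define S :: "(real \<times> real \<times> real) set" where "S = {(u,v,t). \<exists>g' lh'. box_ok lam g' lh' \<and>
     totD lam g' lh' - D \<le> u \<and> totP lam lh' - P \<le> v \<and> rate_obj lam g' \<le> t}"
  define T :: "(real \<times> real \<times> real) set" where "T = {(u,v,t). u < 0 \<and> v < 0 \<and> t < p}"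
  obtain g0 lh0 where w0: "box_ok lam g0 lh0" "totD lam g0 lh0 < D" "totP lam lh0 < P"
    using sf unfolding strictly_feasible_def by blast
  define u0 where "u0 = totD lam g0 lh0 - D"
  define v0 where "v0 = totP lam lh0 - P"
  define t0 where "t0 = rate_obj lam g0"
  have u0: "u0 < 0" and v0: "v0 < 0" using w0 unfolding u0_def v0_def by auto
  have inS: "(u, v, t) \<in> S" if "u0 \<le> u" "v0 \<le> v" "t0 \<le> t" for u v t
    unfolding S_def using that w0(1) unfolding u0_def v0_def t0_def by auto
  have cS: "convex S"
    unfolding convex_def
  proof (intro ballI allI impI)
    fix x y :: "real \<times> real \<times> real" and a b :: real
    assume x: "x \<in> S" and y: "y \<in> S" and ab: "0 \<le> a" "0 \<le> b" "a + b = 1"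
    obtain u1 v1 t1 where xe: "x = (u1, v1, t1)" by (cases x) auto
    obtain u2 v2 t2 where ye: "y = (u2, v2, t2)" by (cases y) auto
    obtain g1 lh1 where w1: "box_ok lam g1 lh1" "totD lam g1 lh1 - D \<le> u1"
        "totP lam lh1 - P \<le> v1" "rate_obj lam g1 \<le> t1"
      using x unfolding xe S_def by auto
    obtain g2 lh2 where w2: "box_ok lam g2 lh2" "totD lam g2 lh2 - D \<le> u2"
        "totP lam lh2 - P \<le> v2" "rate_obj lam g2 \<le> t2"
      using y unfolding ye S_def by auto
    note c = comb[OF lp w1(1) w2(1) ab]
    have Dab: "a * D + b * D = D" "a * P + b * P = P" using ab(3) by (simp_all add: distrib_right[symmetric])
    have m1: "a * (totD lam g1 lh1 - D) + b * (totD lam g2 lh2 - D) \<le> a * u1 + b * u2"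
      using w1 w2 ab by (intro add_mono mult_left_mono) auto
    have m2: "a * (totP lam lh1 - P) + b * (totP lam lh2 - P) \<le> a * v1 + b * v2"
      using w1 w2 ab by (intro add_mono mult_left_mono) auto
    have m3: "a * rate_obj lam g1 + b * rate_obj lam g2 \<le> a * t1 + b * t2"
      using w1 w2 ab by (intro add_mono mult_left_mono) auto
    have "totD lam (\<lambda>l. a * g1 l + b * g2 l) (\<lambda>l. a * lh1 l + b * lh2 l) - D \<le> a * u1 + b * u2"
      using c(2) m1 Dab by (simp add: algebra_simps)
    moreover have "totP lam (\<lambda>l. a * lh1 l + b * lh2 l) - P \<le> a * v1 + b * v2"
      using c(3) m2 Dab by (simp add: algebra_simps)
    moreover have "rate_obj lam (\<lambda>l. a * g1 l + b * g2 l) \<le> a * t1 + b * t2"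
      using c(4) m3 by simp
    ultimately show "a *\<^sub>R x + b *\<^sub>R y \<in> S"
      unfolding xe ye S_def using c(1) by auto
  qed
  have cT: "convex T"
    unfolding convex_def T_def
    by (auto intro!: comb_lt)
  have Sne: "S \<noteq> {}" using inS by blast
  have "(-1,-1,p-1) \<in> T" unfolding T_def by simp
  then have Tne: "T \<noteq> {}" by blast
  have disj: "T \<inter> S = {}"
  proof (rule ccontr)
    assume "T \<inter> S \<noteq> {}"
    then obtain u v t where "(u,v,t) \<in> T" "(u,v,t) \<in> S" by auto
    then obtain g' lh' where "box_ok lam g' lh'" "totD lam g' lh' - D \<le> u" "totP lam lh' - P \<le> v"
      "rate_obj lam g' \<le> t" "u < 0" "v < 0" "t < p" unfolding S_def T_def by auto
    then have "feasible lam D P g' lh'" "rate_obj lam g' < rate_obj lam g"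
      unfolding feasible_def p_def by auto
    then show False using opt unfolding optimal_def by force
  qed
  obtain a b where ab: "a \<noteq> 0" "\<forall>x\<in>T. inner a x \<le> b" "\<forall>x\<in>S. b \<le> inner a x"
    using separating_hyperplane_sets[OF cT cS Tne Sne disj] by blast
  obtain a1 a2 a0 where ae: "a = (a1, a2, a0)" by (cases a) auto
  have Sb: "b \<le> a1 * u + a2 * v + a0 * t" if "(u,v,t) \<in> S" for u v t
    using ab(3) that unfolding ae by (auto simp: algebra_simps)
  have a1: "0 \<le> a1"
  proof (rule nonneg_coef[of b "a1 * u0 + a2 * v0 + a0 * t0"], intro allI impI)
    fix k :: real assume "0 \<le> k"
    then have "b \<le> a1 * (u0+k) + a2 * v0 + a0 * t0" by (intro Sb inS) auto
    then show "b \<le> a1 * u0 + a2 * v0 + a0 * t0 + a1 * k" by (simp add: algebra_simps)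
  qed
  have a2: "0 \<le> a2"
  proof (rule nonneg_coef[of b "a1 * u0 + a2 * v0 + a0 * t0"], intro allI impI)
    fix k :: real assume "0 \<le> k"
    then have "b \<le> a1 * u0 + a2 * (v0+k) + a0 * t0" by (intro Sb inS) auto
    then show "b \<le> a1 * u0 + a2 * v0 + a0 * t0 + a2 * k" by (simp add: algebra_simps)
  qed
  have a0: "0 \<le> a0"
  proof (rule nonneg_coef[of b "a1 * u0 + a2 * v0 + a0 * t0"], intro allI impI)
    fix k :: real assume "0 \<le> k"
    then have "b \<le> a1 * u0 + a2 * v0 + a0 * (t0+k)" by (intro Sb inS) auto
    then show "b \<le> a1 * u0 + a2 * v0 + a0 * t0 + a0 * k" by (simp add: algebra_simps)
  qed
  have "a0 * p \<le> b"
  proof (rule limit_bound[of _ "a1 + a2 + a0"], intro allI impI)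
    fix e :: real assume "0 < e"
    then have "(-e, -e, p - e) \<in> T" unfolding T_def by auto
    then have "inner a (-e, -e, p - e) \<le> b" using ab(2) by blast
    then show "a0 * p - (a1 + a2 + a0) * e \<le> b" unfolding ae by (simp add: algebra_simps)
  qed
  then have Sp: "a0 * p \<le> a1 * u + a2 * v + a0 * t" if "(u,v,t) \<in> S" for u v t
    using Sb[OF that] by linarith
  have a0p: "0 < a0"
  proof (rule ccontr)
    assume "\<not> 0 < a0"
    then have z: "a0 = 0" using a0 by simp
    have s: "0 \<le> a1 * u0 + a2 * v0" using Sp[OF inS[of u0 v0 t0]] z by simp
    have "a1 * u0 \<le> 0" using a1 u0 by (simp add: mult_nonneg_nonpos)
    moreover have "a2 * v0 \<le> 0" using a2 v0 by (simp add: mult_nonneg_nonpos)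
    ultimately have "a1 * u0 = 0" "a2 * v0 = 0" using s by linarith+
    then have "a1 = 0" "a2 = 0" using u0 v0 by auto
    then show False using ab(1) z ae by (simp add: zero_prod_def)
  qed
  show ?thesis
  proof (intro exI conjI allI impI)
    show "0 \<le> a1 / a0" "0 \<le> a2 / a0" using a1 a2 a0p by auto
    fix g' lh' assume b': "box_ok lam g' lh'"
    have "(totD lam g' lh' - D, totP lam lh' - P, rate_obj lam g') \<in> S"
      unfolding S_def using b' by blast
    then have "a0 * p \<le> a1 * (totD lam g' lh' - D) + a2 * (totP lam lh' - P) + a0 * rate_obj lam g'"
      by (rule Sp)
    also have "\<dots> = a0 * (rate_obj lam g' + a1 / a0 * (totD lam g' lh' - D) + a2 / a0 * (totP lam lh' - P))"
      using a0p by (simp add: field_simps)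
    finally show "rate_obj lam g \<le> rate_obj lam g' + a1 / a0 * (totD lam g' lh' - D) + a2 / a0 * (totP lam lh' - P)"
      using a0p unfolding p_def by (simp add: mult_le_cancel_left_pos)
  qed
qed



lemma theta_pos:
  fixes n1 n2 lam t :: real
  assumes n1: "0 < n1" and n2: "0 < n2" and lam: "0 < lam" and te: "theta_eq n1 n2 lam t"
  shows "0 < t" "0 < 1 + (1 - t) * n1 / n2"
proof -
  have d0: "1 + (1 - t) * n1 / n2 \<noteq> 0" and eq: "t / (1 + (1 - t) * n1 / n2) = sqrt (1 - t / (2 * n1 * lam))"
    using te unfolding theta_eq_def by auto
  show t0: "0 < t"
  proof (rule ccontr)
    assume "\<not> 0 < t"
    then have t: "t \<le> 0" by simp
    have "0 \<le> (1 - t) * n1 / n2" using t n1 n2 by simp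
    then have "0 < 1 + (1 - t) * n1 / n2" by linarith
    then have "t / (1 + (1 - t) * n1 / n2) \<le> 0" using t by (simp add: divide_nonpos_pos)
    moreover have "t / (2 * n1 * lam) \<le> 0" using t n1 lam by (simp add: divide_nonpos_pos)
    then have "1 \<le> sqrt (1 - t / (2 * n1 * lam))" by simp
    ultimately show False using eq by simp
  qed
  show "0 < 1 + (1 - t) * n1 / n2"
  proof (rule ccontr)
    assume "\<not> 0 < 1 + (1 - t) * n1 / n2"
    then have "1 + (1 - t) * n1 / n2 < 0" using d0 by simp
    then have "t / (1 + (1 - t) * n1 / n2) < 0" using t0 by (simp add: divide_pos_neg)
    moreover have "t \<le> 2 * n1 * lam" using te unfolding theta_eq_def by simp
    then have "t / (2 * n1 * lam) \<le> 1" using n1 lam by simp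
    then have "0 \<le> sqrt (1 - t / (2 * n1 * lam))" by simp
    ultimately show False using eq by simp
  qed
qed

lemma theta_lt_false:
  fixes n1 n2 lam t1 t2 :: real
  assumes n1: "0 < n1" and n2: "0 < n2" and lam: "0 < lam"
    and te1: "theta_eq n1 n2 lam t1" and te2: "theta_eq n1 n2 lam t2" and lt: "t1 < t2"
  shows False
proof -
  define r where "r = n1 / n2"
  have r: "0 < r" using n1 n2 unfolding r_def by simp
  have dd: "\<And>t. 1 + (1 - t) * n1 / n2 = 1 + (1 - t) * r" unfolding r_def by simp
  have p1: "0 < t1" "0 < 1 + (1 - t1) * r" using theta_pos[OF n1 n2 lam te1] dd by auto
  have p2: "0 < t2" "0 < 1 + (1 - t2) * r" using theta_pos[OF n1 n2 lam te2] dd by auto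
  have e1: "t1 / (1 + (1 - t1) * r) = sqrt (1 - t1 / (2 * n1 * lam))" using te1 dd unfolding theta_eq_def by auto
  have e2: "t2 / (1 + (1 - t2) * r) = sqrt (1 - t2 / (2 * n1 * lam))" using te2 dd unfolding theta_eq_def by auto
  have "t1 * (1 + (1 - t2) * r) < t2 * (1 + (1 - t1) * r)"
  proof -
    have "t2 * (1 + (1 - t1) * r) - t1 * (1 + (1 - t2) * r) = (t2 - t1) * (1 + r)"
      by (simp add: algebra_simps)
    moreover have "0 < (t2 - t1) * (1 + r)" using lt r by simp
    ultimately show ?thesis by linarith
  qed
  then have "t1 / (1 + (1 - t1) * r) < t2 / (1 + (1 - t2) * r)"
    using p1 p2 by (simp add: divide_simps mult.commute)
  moreover have "t1 / (2 * n1 * lam) \<le> t2 / (2 * n1 * lam)" using lt n1 lam by (simp add: divide_right_mono)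
  then have "sqrt (1 - t2 / (2 * n1 * lam)) \<le> sqrt (1 - t1 / (2 * n1 * lam))" by simp
  ultimately show False using e1 e2 by linarith
qed

lemma theta_unique:
  fixes n1 n2 lam t1 t2 :: real
  assumes "0 < n1" "0 < n2" "0 < lam" "theta_eq n1 n2 lam t1" "theta_eq n1 n2 lam t2"
  shows "t1 = t2"
  using theta_lt_false[OF assms(1-3)] assms(4,5) by (meson linorder_neqE_linordered_idom)



definition phi :: "real \<Rightarrow> real \<Rightarrow> real \<Rightarrow> real \<Rightarrow> real \<Rightarrow> real" where
  "phi lam n1 n2 x y = (1/2) * ln (lam / x) + n1 * Dl lam x y + n2 * Pl lam y"

lemma psi_deriv:
  fixes lam n1 n2 s b :: real
  assumes "0 < n1" "0 < n2" "b^2 < lam"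
  shows "((\<lambda>b. (1/2) * (ln lam - ln (lam - b^2)) + (n1*lam + n2*lam - (n1*b + n2 * s)^2/(n1+n2)))
     has_real_derivative (b / (lam - b^2) - 2 * n1 * ((n1*b + n2 * s)/(n1+n2)))) (at b)"
proof -
  have l: "0 < lam - b^2" using assms by simp
  have n: "n1 + n2 \<noteq> 0" using assms by simp
  have d0: "((\<lambda>b. lam - b^2) has_real_derivative (- (2*b))) (at b)"
    by (auto intro!: derivative_eq_intros)
  have d1: "((\<lambda>b. ln (lam - b^2)) has_real_derivative (- (2*b)) / (lam - b^2)) (at b)"
    using DERIV_chain2[OF DERIV_ln_divide[OF l] d0] by simp
  have d2: "((\<lambda>b. (n1*b + n2 * s)^2) has_real_derivative (2 * (n1*b + n2 * s) * n1)) (at b)"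
    by (auto intro!: derivative_eq_intros)
  have d3: "((\<lambda>b. (1/2) * (ln lam - ln (lam - b^2)) + (n1*lam + n2*lam - (n1*b + n2 * s)^2/(n1+n2)))
     has_real_derivative ((1/2) * (0 - (- (2*b)) / (lam - b^2)) + (0 - (2 * (n1*b + n2 * s) * n1) / (n1+n2)))) (at b)"
    by (intro DERIV_add DERIV_cmult DERIV_diff DERIV_const d1 DERIV_cdivide d2)
  have e: "(1/2) * (0 - (- (2*b)) / (lam - b^2)) + (0 - (2 * (n1*b + n2 * s) * n1) / (n1+n2))
       = b / (lam - b^2) - 2 * n1 * ((n1*b + n2 * s)/(n1+n2))"
    using n by (simp add: field_simps)
  show ?thesis using d3 unfolding e .
qed

lemma comp:
  fixes lam n1 n2 g lh :: real
  assumes lam: "0 < lam" and n1: "0 < n1" and n2: "0 < n2" and g: "0 < g" "g \<le> lam" and lh: "0 \<le> lh"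
    and mn: "\<And>x y. 0 < x \<Longrightarrow> x \<le> lam \<Longrightarrow> 0 \<le> y \<Longrightarrow> phi lam n1 n2 g lh \<le> phi lam n1 n2 x y"
  shows "g < lam \<and> theta_eq n1 n2 lam (2*n1*g) \<and> lh = lam / (1 + (1 - 2*n1*g) * n1 / n2)^2"
proof -
  define s where "s = sqrt lam"
  have s0: "0 < s" using lam unfolding s_def by simp
  have ss: "s^2 = lam" using lam unfolding s_def by simp
  define A where "A b = (n1*b + n2 * s)/(n1+n2)" for b
  define Q where "Q a b = n1*(lam - 2*a*b + a^2) + n2*(s - a)^2" for a b
  define K where "K b = n1*lam + n2*lam - (n1*b+n2 * s)^2/(n1+n2)" for b
  have sq: "c*(a - m/c)^2 = c*a^2 - 2*a*m + m^2/c" if "c \<noteq> 0" for c a m :: real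
    using that by (simp add: field_simps power2_eq_square)
  have Qid: "Q a b = (n1+n2)*(a - A b)^2 + K b" for a b
  proof -
    have "n1 + n2 \<noteq> 0" using n1 n2 by simp
    then have "(n1+n2)*(a - A b)^2 = (n1+n2)*a^2 - 2*a*(n1*b + n2 * s) + (n1*b + n2 * s)^2/(n1+n2)"
      unfolding A_def by (rule sq)
    moreover have "Q a b = (n1+n2)*a^2 - 2*a*(n1*b + n2 * s) + n1*lam + n2 * s^2"
      unfolding Q_def by (simp add: algebra_simps power2_eq_square)
    ultimately show ?thesis unfolding K_def using ss by simp
  qed
  have phiQ: "phi lam n1 n2 x (a^2) = (1/2)*ln(lam/x) + Q a (sqrt(lam - x))" if "0 \<le> a" "x \<le> lam" for x a
  proof -
    have "sqrt (a^2 * (lam - x)) = a * sqrt (lam - x)" using that by (simp add: real_sqrt_mult)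
    moreover have "sqrt (a^2) = a" using that by simp
    ultimately show ?thesis unfolding phi_def Dl_def Pl_def Q_def s_def by (simp add: algebra_simps)
  qed
  define \<beta> where "\<beta> = sqrt (lam - g)"
  define \<alpha> where "\<alpha> = sqrt lh"
  have b0: "0 \<le> \<beta>" unfolding \<beta>_def using g by simp
  have bsq: "\<beta>^2 = lam - g" unfolding \<beta>_def using g by simp
  have asq: "\<alpha>^2 = lh" unfolding \<alpha>_def using lh by simp
  have a0: "0 \<le> \<alpha>" unfolding \<alpha>_def using lh by simp
  have bs: "\<beta> < s"
  proof -
    have "\<beta>^2 < s^2" using bsq ss g by simp
    then show ?thesis using s0 b0 by (meson power_less_imp_less_base less_imp_le)
  qed
  have Apos: "0 \<le> A b" if "0 \<le> b" for b unfolding A_def using that n1 n2 s0 by simp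
  have base: "phi lam n1 n2 g lh = (1/2)*ln(lam/g) + Q \<alpha> \<beta>"
    using phiQ[OF a0 g(2)] asq unfolding \<beta>_def by simp
  have aA: "\<alpha> = A \<beta>"
  proof -
    have "phi lam n1 n2 g lh \<le> phi lam n1 n2 g ((A \<beta>)^2)" using mn g by simp
    also have "\<dots> = (1/2)*ln(lam/g) + Q (A \<beta>) \<beta>" using phiQ[OF Apos[OF b0] g(2)] unfolding \<beta>_def by simp
    finally have "Q \<alpha> \<beta> \<le> Q (A \<beta>) \<beta>" using base by simp
    then have "(n1+n2)*(\<alpha> - A \<beta>)^2 \<le> 0" using Qid by simp
    then have "(\<alpha> - A \<beta>)^2 \<le> 0" using n1 n2 by (simp add: mult_le_0_iff)
    then show ?thesis by simp
  qed
  define psi where "psi b = (1/2) * (ln lam - ln (lam - b^2)) + K b" for b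
  have psi_phi: "psi b = phi lam n1 n2 (lam - b^2) ((A b)^2)" if "0 \<le> b" "b < s" for b
  proof -
    have "b^2 < s^2" using that by (simp add: power_strict_mono)
    then have lb: "0 < lam - b^2" using ss by simp
    have "phi lam n1 n2 (lam - b^2) ((A b)^2) = (1/2)*ln(lam/(lam - b^2)) + Q (A b) b"
      using phiQ[OF Apos[OF that(1)], of "lam - b^2"] that by simp
    also have "\<dots> = psi b" unfolding psi_def using Qid lb lam by (simp add: ln_div)
    finally show ?thesis by simp
  qed
  have psi_b: "psi \<beta> = phi lam n1 n2 g lh"
    using psi_phi[OF b0 bs] aA asq bsq by simp
  have psi_min: "psi \<beta> \<le> psi b" if "0 \<le> b" "b < s" for b
  proof -
    have "b^2 < s^2" using that by (simp add: power_strict_mono)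
    then have lb: "0 < lam - b^2" using ss by simp
    show ?thesis unfolding psi_b psi_phi[OF that] using lb by (intro mn) auto
  qed
  have dpsi: "DERIV psi b :> (b / (lam - b^2) - 2 * n1 * A b)" if "b^2 < lam" for b
    unfolding psi_def K_def A_def using psi_deriv[OF n1 n2 that] by simp
  have bpos: "0 < \<beta>"
  proof (rule ccontr)
    assume "\<not> 0 < \<beta>"
    then have bz: "\<beta> = 0" using b0 by simp
    have "DERIV psi 0 :> (0 / (lam - 0^2) - 2 * n1 * A 0)" using dpsi[of 0] lam by simp
    moreover have "0 / (lam - 0^2) - 2 * n1 * A 0 < 0" unfolding A_def using n1 n2 s0 by simp
    ultimately obtain d where d: "0 < d" "\<forall>h>0. h < d \<longrightarrow> psi 0 > psi (0 + h)"
      using DERIV_neg_dec_right by blast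
    define h where "h = min d s / 2"
    have "0 < h" "h < d" "h < s" using d s0 unfolding h_def by auto
    then have "psi 0 > psi h" "psi \<beta> \<le> psi h" using d psi_min by auto
    then show False using bz by simp
  qed
  have deq: "\<beta> / (lam - \<beta>^2) - 2 * n1 * A \<beta> = 0"
  proof (rule DERIV_local_min[OF dpsi])
    show "\<beta>^2 < lam" using bsq g by simp
    show "0 < min \<beta> (s - \<beta>)" using bpos bs by simp
    show "\<forall>y. \<bar>\<beta> - y\<bar> < min \<beta> (s - \<beta>) \<longrightarrow> psi \<beta> \<le> psi y"
      using psi_min by (auto simp: abs_less_iff)
  qed
  define \<theta> where "\<theta> = 2*n1*g"
  have th0: "0 < \<theta>" unfolding \<theta>_def using n1 g by simp
  have bta: "\<beta> = \<theta> * \<alpha>"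
  proof -
    have "\<beta> / g = 2 * n1 * \<alpha>" using deq bsq aA by simp
    then show ?thesis unfolding \<theta>_def using g by (simp add: field_simps)
  qed
  have aeq: "\<alpha> * (n1+n2) = n1*\<beta> + n2 * s" using aA n1 n2 unfolding A_def by (simp add: field_simps)
  define den where "den = 1 + (1 - \<theta>) * n1 / n2"
  have bden: "\<beta> * den = \<theta> * s"
  proof -
    have "\<beta> * den * n2 = \<beta> * (n1 + n2) - \<theta> * n1 * \<beta>" unfolding den_def using n2 by (simp add: field_simps)
    also have "\<dots> = \<theta> * (\<alpha> * (n1+n2)) - \<theta> * n1 * \<beta>" using bta by simp
    also have "\<dots> = \<theta> * s * n2" using aeq by (simp add: algebra_simps)
    finally show ?thesis using n2 by simp
  qed
  have den0: "0 < den"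
  proof -
    have "0 < \<beta> * den" using bden th0 s0 by simp
    then show ?thesis using bpos by (simp add: zero_less_mult_iff)
  qed
  have glt: "g < lam" using bsq bpos by (smt (verit) zero_less_power)
  have "\<theta> / den = \<beta> / s" using bden den0 s0 by (simp add: field_simps)
  moreover have "sqrt (1 - \<theta> / (2 * n1 * lam)) = \<beta> / s"
  proof -
    have "1 - \<theta> / (2 * n1 * lam) = (lam - g) / lam" unfolding \<theta>_def using n1 lam by (simp add: field_simps)
    then show ?thesis unfolding \<beta>_def s_def by (simp add: real_sqrt_divide)
  qed
  moreover have "\<theta> \<le> 2 * n1 * lam" unfolding \<theta>_def using n1 g by simp
  ultimately have te: "theta_eq n1 n2 lam \<theta>" unfolding theta_eq_def den_def[symmetric] using den0 by simp
  have "lh = \<alpha>^2" using asq by simp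
  also have "\<alpha> = s / den" using bta bden th0 den0 by (simp add: field_simps)
  finally have "lh = lam / den^2" using ss by (simp add: power_divide)
  then show ?thesis using te glt unfolding den_def \<theta>_def by simp
qed


lemma sum_upd:
  fixes F :: "'n::finite \<Rightarrow> real \<Rightarrow> real \<Rightarrow> real"
  shows "(\<Sum>l\<in>UNIV. F l ((g(k:=x)) l) ((lh(k:=y)) l))
       = (\<Sum>l\<in>UNIV. F l (g l) (lh l)) - F k (g k) (lh k) + F k x y"
proof -
  have a: "(\<Sum>l\<in>UNIV. F l ((g(k:=x)) l) ((lh(k:=y)) l)) = F k x y + (\<Sum>l\<in>UNIV-{k}. F l ((g(k:=x)) l) ((lh(k:=y)) l))"
    by (subst sum.remove[of UNIV k]) auto
  have b: "(\<Sum>l\<in>UNIV. F l (g l) (lh l)) = F k (g k) (lh k) + (\<Sum>l\<in>UNIV-{k}. F l (g l) (lh l))"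
    by (subst sum.remove[of UNIV k]) auto
  have c: "(\<Sum>l\<in>UNIV-{k}. F l ((g(k:=x)) l) ((lh(k:=y)) l)) = (\<Sum>l\<in>UNIV-{k}. F l (g l) (lh l))"
    by (rule sum.cong) auto
  show ?thesis using a b c by simp
qed

lemma sum_two:
  fixes f h :: "'n::finite \<Rightarrow> real"
  assumes "i \<noteq> j" "\<forall>l. l \<noteq> i \<and> l \<noteq> j \<longrightarrow> f l = h l"
  shows "(\<Sum>l\<in>UNIV. f l) - (\<Sum>l\<in>UNIV. h l) = (f i - h i) + (f j - h j)"
proof -
  have "(\<Sum>l\<in>UNIV. f l) - (\<Sum>l\<in>UNIV. h l) = (\<Sum>l\<in>UNIV. f l - h l)" by (simp add: sum_subtractf)
  also have "\<dots> = (\<Sum>l\<in>{i,j}. f l - h l)"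
    by (rule sum.mono_neutral_right) (use assms in auto)
  also have "\<dots> = (f i - h i) + (f j - h j)" using assms by simp
  finally show ?thesis .
qed

lemma rate_alt:
  assumes "\<forall>l. 0 < lam l" "\<forall>l. 0 < g l"
  shows "rate_obj lam g = (1/2) * (\<Sum>l\<in>UNIV. ln (lam l)) - (1/2) * (\<Sum>l\<in>UNIV. ln (g l))"
proof -
  have "ln (lam l / g l) = ln (lam l) - ln (g l)" for l
    using spec[OF assms(1), of l] spec[OF assms(2), of l] by (simp add: ln_div)
  then show ?thesis unfolding rate_obj_def by (simp add: sum_subtractf right_diff_distrib)
qed

lemma rate_nonneg:
  assumes "box_ok lam g lh"
  shows "0 \<le> rate_obj lam g"
proof -
  have "0 \<le> ln (lam l / g l)" for l
  proof -
    have h: "0 < g l" "g l \<le> lam l" using assms unfolding box_ok_def by auto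
    then have "1 \<le> lam l / g l" by simp
    then show ?thesis by (rule ln_ge_zero)
  qed
  then show ?thesis unfolding rate_obj_def by (simp add: sum_nonneg)
qed

lemma rate_lam: "rate_obj lam lam = 0"
proof -
  have "ln (lam l / lam l) = 0" for l by (cases "lam l = 0") auto
  then show ?thesis unfolding rate_obj_def by simp
qed

lemma Dl_self: "Dl lam lam y = lam + y"
  unfolding Dl_def by simp

lemma totP_nonneg: "0 \<le> totP lam lh"
  unfolding totP_def Pl_def by (simp add: sum_nonneg)

lemma part3:
  fixes lam g lh :: "'n::finite \<Rightarrow> real"
  assumes lp: "\<forall>l. 0 < lam l" and sf: "strictly_feasible lam D P" and opt: "optimal lam D P g lh"
    and Din: "D_inactive lam D P"
  shows "(\<forall>l. g l = lam l) \<and>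
       lh \<in> {x. totP lam x \<le> P \<and> (\<Sum>l\<in>UNIV. lam l + x l) \<le> D \<and> (\<forall>l. 0 \<le> x l)} \<and>
       (\<forall>x\<in>{x. totP lam x \<le> P \<and> (\<Sum>l\<in>UNIV. lam l + x l) \<le> D \<and> (\<forall>l. 0 \<le> x l)}.
          optimal lam D P lam x)"
proof -
  obtain g0 lh0 where o0: "optimal_noD lam P g0 lh0" "feasible lam D P g0 lh0"
    using Din unfolding D_inactive_def by blast
  obtain gs lhs where "box_ok lam gs lhs" "totP lam lhs < P" using sf unfolding strictly_feasible_def by blast
  then have P0: "0 \<le> P" using totP_nonneg[of lam lhs] by linarith
  have blam: "box_ok lam lam x" if "\<forall>l. 0 \<le> x l" for x using lp that unfolding box_ok_def by auto
  have "totP lam lam = 0" unfolding totP_def Pl_def by simp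
  then have fnD: "feasible_noD lam P lam lam" unfolding feasible_noD_def using blam lp P0
    by (simp add: less_imp_le)
  have "rate_obj lam g0 \<le> rate_obj lam lam" using o0(1) fnD unfolding optimal_noD_def by blast
  then have "rate_obj lam g0 \<le> 0" using rate_lam[of lam] by simp
  moreover have "rate_obj lam g \<le> rate_obj lam g0" using opt o0(2) unfolding optimal_def by blast
  moreover have bg: "box_ok lam g lh" using opt unfolding optimal_def feasible_def by blast
  ultimately have r0: "rate_obj lam g = 0" using rate_nonneg[OF bg] by linarith
  have tn: "\<forall>l\<in>UNIV. 0 \<le> ln (lam l / g l)"
  proof
    fix l :: 'n
    have h: "0 < g l" "g l \<le> lam l" using bg unfolding box_ok_def by auto
    then have "1 \<le> lam l / g l" by simp
    then show "0 \<le> ln (lam l / g l)" by (rule ln_ge_zero)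
  qed
  have "(\<Sum>l\<in>UNIV. ln (lam l / g l)) = 0" using r0 unfolding rate_obj_def by simp
  then have z0: "\<forall>l\<in>UNIV. ln (lam l / g l) = 0"
  proof -
    assume z: "(\<Sum>l\<in>UNIV. ln (lam l / g l)) = 0"
    have tn': "\<And>l. l \<in> UNIV \<Longrightarrow> 0 \<le> ln (lam l / g l)" using tn by blast
    show ?thesis using sum_nonneg_eq_0_iff[OF finite_class.finite_UNIV tn'] z by (rule iffD1)
  qed
  have gl: "\<forall>l. g l = lam l"
  proof
    fix l :: 'n
    have h: "0 < g l" "0 < lam l" using bg lp unfolding box_ok_def by auto
    then have q: "0 < lam l / g l" by simp
    have "ln (lam l / g l) = 0" using z0 by blast
    then have "lam l / g l = 1" using q by simp
    then show "g l = lam l" using h by (simp add: divide_eq_1_iff)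
  qed
  have tD: "totD lam lam x = (\<Sum>l\<in>UNIV. lam l + x l)" for x unfolding totD_def Dl_self by simp
  have glam: "g = lam" using gl by auto
  have "lh \<in> {x. totP lam x \<le> P \<and> (\<Sum>l\<in>UNIV. lam l + x l) \<le> D \<and> (\<forall>l. 0 \<le> x l)}"
    using opt bg unfolding optimal_def feasible_def box_ok_def glam tD by auto
  moreover have "\<forall>x\<in>{x. totP lam x \<le> P \<and> (\<Sum>l\<in>UNIV. lam l + x l) \<le> D \<and> (\<forall>l. 0 \<le> x l)}.
          optimal lam D P lam x"
  proof
    fix x assume "x \<in> {x. totP lam x \<le> P \<and> (\<Sum>l\<in>UNIV. lam l + x l) \<le> D \<and> (\<forall>l. 0 \<le> x l)}"
    then have "feasible lam D P lam x" unfolding feasible_def tD using blam by auto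
    then show "optimal lam D P lam x" unfolding optimal_def feasible_def rate_lam
      using rate_nonneg by blast
  qed
  ultimately show ?thesis using gl by blast
qed

lemma lag_split:
  fixes lam g lh :: "'n::finite \<Rightarrow> real"
  shows "rate_obj lam g + n1 * (totD lam g lh - D) + n2 * (totP lam lh - P)
       = (\<Sum>l\<in>UNIV. phi (lam l) n1 n2 (g l) (lh l)) - n1 * D - n2 * P"
  unfolding rate_obj_def totD_def totP_def phi_def
  by (simp add: sum.distrib sum_distrib_left algebra_simps)


lemma part1:
  fixes lam g lh :: "'n::finite \<Rightarrow> real"
  assumes lp: "\<forall>l. 0 < lam l" and sf: "strictly_feasible lam D P" and opt: "optimal lam D P g lh"
    and nD: "\<not> D_inactive lam D P" and nP: "\<not> P_inactive lam D P"
  shows "(\<exists>nu1 nu2. 0 < nu1 \<and> 0 < nu2 \<and>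
          (\<exists>\<theta>::'n \<Rightarrow> real. \<forall>l.
             theta_eq nu1 nu2 (lam l) (\<theta> l) \<and>
             (\<forall>t. theta_eq nu1 nu2 (lam l) t \<longrightarrow> t = \<theta> l) \<and>
             g l = \<theta> l / (2 * nu1) \<and>
             lh l = lam l / (1 + (1 - \<theta> l) * nu1 / nu2)\<^sup>2) \<and>
          totD lam g lh = D \<and> totP lam lh = P) \<and>
       (\<forall>l. g l < lam l)"
proof -
  obtain n1 n2 where n: "0 \<le> n1" "0 \<le> n2" and L: "\<And>g' lh'. box_ok lam g' lh' \<Longrightarrow>
     rate_obj lam g \<le> rate_obj lam g' + n1 * (totD lam g' lh' - D) + n2 * (totP lam lh' - P)"
    using lagrange[OF lp sf opt] by blast
  have fe: "feasible lam D P g lh" using opt unfolding optimal_def by blast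
  then have bg: "box_ok lam g lh" and cD: "totD lam g lh \<le> D" and cP: "totP lam lh \<le> P"
    unfolding feasible_def by auto
  have "0 \<le> n1 * (totD lam g lh - D) + n2 * (totP lam lh - P)" using L[OF bg] by simp
  moreover have "n1 * (totD lam g lh - D) \<le> 0" using n cD by (simp add: mult_nonneg_nonpos)
  moreover have "n2 * (totP lam lh - P) \<le> 0" using n cP by (simp add: mult_nonneg_nonpos)
  ultimately have cs1: "n1 * (totD lam g lh - D) = 0" and cs2: "n2 * (totP lam lh - P) = 0" by linarith+
  have n1p: "0 < n1"
  proof (rule ccontr)
    assume "\<not> 0 < n1"
    then have z: "n1 = 0" using n by simp
    have "optimal_noD lam P g lh" unfolding optimal_noD_def feasible_noD_def
    proof (intro conjI allI impI)
      show "box_ok lam g lh" "totP lam lh \<le> P" using bg cP by auto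
      fix g' lh' assume "box_ok lam g' lh' \<and> totP lam lh' \<le> P"
      then have bb: "box_ok lam g' lh'" and tp: "totP lam lh' \<le> P" by auto
      have "n2 * (totP lam lh' - P) \<le> 0" using n(2) tp by (simp add: mult_nonneg_nonpos)
      then show "rate_obj lam g \<le> rate_obj lam g'" using L[OF bb] z by simp
    qed
    then show False using nD fe unfolding D_inactive_def by blast
  qed
  have n2p: "0 < n2"
  proof (rule ccontr)
    assume "\<not> 0 < n2"
    then have z: "n2 = 0" using n by simp
    have "optimal_noP lam D g lh" unfolding optimal_noP_def feasible_noP_def
    proof (intro conjI allI impI)
      show "box_ok lam g lh" "totD lam g lh \<le> D" using bg cD by auto
      fix g' lh' assume "box_ok lam g' lh' \<and> totD lam g' lh' \<le> D"
      then have bb: "box_ok lam g' lh'" and td: "totD lam g' lh' \<le> D" by auto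
      have "n1 * (totD lam g' lh' - D) \<le> 0" using n(1) td by (simp add: mult_nonneg_nonpos)
      then show "rate_obj lam g \<le> rate_obj lam g'" using L[OF bb] z by simp
    qed
    then show False using nP fe unfolding P_inactive_def by blast
  qed
  have eD: "totD lam g lh = D" using cs1 n1p by simp
  have eP: "totP lam lh = P" using cs2 n2p by simp
  have cmin: "phi (lam k) n1 n2 (g k) (lh k) \<le> phi (lam k) n1 n2 x y"
    if "0 < x" "x \<le> lam k" "0 \<le> y" for k x y
  proof -
    have b': "box_ok lam (g(k:=x)) (lh(k:=y))" using bg that unfolding box_ok_def by auto
    have "rate_obj lam g + n1 * (totD lam g lh - D) + n2 * (totP lam lh - P)
       \<le> rate_obj lam (g(k:=x)) + n1 * (totD lam (g(k:=x)) (lh(k:=y)) - D) + n2 * (totP lam (lh(k:=y)) - P)"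
      using L[OF b'] cs1 cs2 by linarith
    then have "(\<Sum>l\<in>UNIV. phi (lam l) n1 n2 (g l) (lh l))
        \<le> (\<Sum>l\<in>UNIV. phi (lam l) n1 n2 ((g(k:=x)) l) ((lh(k:=y)) l))"
      unfolding lag_split by simp
    then show ?thesis
      using sum_upd[of "\<lambda>l a b. phi (lam l) n1 n2 a b" g k x lh y] by simp
  qed
  have C: "g l < lam l \<and> theta_eq n1 n2 (lam l) (2*n1*g l) \<and>
      lh l = lam l / (1 + (1 - 2*n1*g l) * n1 / n2)^2" for l
  proof -
    have h: "0 < g l" "g l \<le> lam l" "0 \<le> lh l" using bg unfolding box_ok_def by auto
    show ?thesis by (rule comp[OF spec[OF lp, of l] n1p n2p h cmin])
  qed
  define \<theta> where "\<theta> = (\<lambda>l. 2*n1*g l)"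
  have A: "\<forall>l. theta_eq n1 n2 (lam l) (\<theta> l) \<and>
             (\<forall>t. theta_eq n1 n2 (lam l) t \<longrightarrow> t = \<theta> l) \<and>
             g l = \<theta> l / (2 * n1) \<and>
             lh l = lam l / (1 + (1 - \<theta> l) * n1 / n2)\<^sup>2"
  proof (intro allI conjI impI)
    fix l
    show te: "theta_eq n1 n2 (lam l) (\<theta> l)" using C unfolding \<theta>_def by blast
    show "g l = \<theta> l / (2 * n1)" unfolding \<theta>_def using n1p by simp
    show "lh l = lam l / (1 + (1 - \<theta> l) * n1 / n2)\<^sup>2" using C unfolding \<theta>_def by blast
    fix t assume "theta_eq n1 n2 (lam l) t"
    then show "t = \<theta> l" by (rule theta_unique[OF n1p n2p spec[OF lp, of l] _ te])
  qed
  have B: "\<forall>l. g l < lam l" using C by blast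
  have "\<exists>nu1 nu2. 0 < nu1 \<and> 0 < nu2 \<and>
          (\<exists>\<theta>::'n \<Rightarrow> real. \<forall>l.
             theta_eq nu1 nu2 (lam l) (\<theta> l) \<and>
             (\<forall>t. theta_eq nu1 nu2 (lam l) t \<longrightarrow> t = \<theta> l) \<and>
             g l = \<theta> l / (2 * nu1) \<and>
             lh l = lam l / (1 + (1 - \<theta> l) * nu1 / nu2)\<^sup>2) \<and>
          totD lam g lh = D \<and> totP lam lh = P"
    by (rule exI[of _ n1], rule exI[of _ n2]) (use n1p n2p eD eP A in blast)
  then show ?thesis using B by blast
qed



lemma Dl_lamg: "0 < x \<Longrightarrow> x \<le> lam \<Longrightarrow> Dl lam x (lam - x) = x"
  using Dl_eq[of "lam - x" x lam] by simp

lemma part2: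
  fixes lam g lh :: "'n::finite \<Rightarrow> real"
  assumes lp: "\<forall>l. 0 < lam l" and sf: "strictly_feasible lam D P" and opt: "optimal lam D P g lh"
    and nD: "\<not> D_inactive lam D P" and Pin: "P_inactive lam D P"
  shows "\<exists>nu1. 0 < nu1 \<and>
          (\<Sum>l\<in>UNIV. pos_part (lam l - 1 / (2 * nu1))) = pos_part ((\<Sum>l\<in>UNIV. lam l) - D) \<and>
          (\<forall>l. g l = min (1 / (2 * nu1)) (lam l) \<and>
               lh l = lam l - min (1 / (2 * nu1)) (lam l))"
proof -
  obtain g0 lh0 where o0: "optimal_noP lam D g0 lh0" "feasible lam D P g0 lh0"
    using Pin unfolding P_inactive_def by blast
  have fe: "feasible lam D P g lh" using opt unfolding optimal_def by blast
  then have bg: "box_ok lam g lh" and cD: "totD lam g lh \<le> D" and cP: "totP lam lh \<le> P"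
    unfolding feasible_def by auto
  have hb: "0 < g l" "g l \<le> lam l" "0 \<le> lh l" for l using bg unfolding box_ok_def by auto
  have noP: "rate_obj lam g \<le> rate_obj lam g'" if "feasible_noP lam D g' lh'" for g' lh'
  proof -
    have "rate_obj lam g \<le> rate_obj lam g0" using opt o0(2) unfolding optimal_def by blast
    also have "\<dots> \<le> rate_obj lam g'" using o0(1) that unfolding optimal_noP_def by blast
    finally show ?thesis .
  qed
  have modf: "feasible_noP lam D g' (\<lambda>l. lam l - g' l)"
    if "\<forall>l. 0 < g' l \<and> g' l \<le> lam l" "(\<Sum>l\<in>UNIV. g' l) \<le> D" for g'
  proof -
    have "totD lam g' (\<lambda>l. lam l - g' l) = (\<Sum>l\<in>UNIV. g' l)"
      unfolding totD_def using that(1) Dl_lamg by simp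
    then show ?thesis unfolding feasible_noP_def box_ok_def using that by auto
  qed
  have sg: "(\<Sum>l\<in>UNIV. g l) \<le> totD lam g lh"
    unfolding totD_def by (rule sum_mono) (use hb Dl_ge in auto)
  have gpos: "\<forall>l. 0 < g l" using hb by auto
  have W: "g j \<le> g i" if gi: "g i < lam i" for i j
  proof (rule ccontr)
    assume "\<not> g j \<le> g i"
    then have gji: "g i < g j" by simp
    then have ij: "i \<noteq> j" by auto
    define e where "e = min (lam i - g i) (g j - g i) / 2"
    have e0: "0 < e" using gi gji unfolding e_def by simp
    have e1: "e < lam i - g i" "e < g j - g i" using gi gji unfolding e_def by auto
    define g' where "g' = g(i := g i + e, j := g j - e)"
    have g'i: "g' i = g i + e" unfolding g'_def using ij by simp
    have g'j: "g' j = g j - e" unfolding g'_def by simp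
    have g'o: "\<forall>l. l \<noteq> i \<and> l \<noteq> j \<longrightarrow> g' l = g l" unfolding g'_def by simp
    have b': "\<forall>l. 0 < g' l \<and> g' l \<le> lam l"
    proof
      fix l show "0 < g' l \<and> g' l \<le> lam l"
        using hb[of l] hb[of i] hb[of j] e0 e1 g'i g'j g'o by (cases "l = i"; cases "l = j") auto
    qed
    have "(\<Sum>l\<in>UNIV. g' l) - (\<Sum>l\<in>UNIV. g l) = (g' i - g i) + (g' j - g j)"
      by (rule sum_two[OF ij g'o])
    then have "(\<Sum>l\<in>UNIV. g' l) = (\<Sum>l\<in>UNIV. g l)" using g'i g'j by simp
    then have "feasible_noP lam D g' (\<lambda>l. lam l - g' l)" using modf b' sg cD by simp
    then have r: "rate_obj lam g \<le> rate_obj lam g'" by (rule noP)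
    have S: "(\<Sum>l\<in>UNIV. ln (g' l)) - (\<Sum>l\<in>UNIV. ln (g l)) = (ln (g' i) - ln (g i)) + (ln (g' j) - ln (g j))"
      by (rule sum_two[OF ij]) (use g'o in simp)
    have g'p: "\<forall>l. 0 < g' l" using b' by blast
    have L1: "ln (g' i * g' j) = ln (g' i) + ln (g' j)" using g'p by (intro ln_mult_pos) auto
    have L2: "ln (g i * g j) = ln (g i) + ln (g j)" using gpos by (intro ln_mult_pos) auto
    have prod: "g i * g j < g' i * g' j"
    proof -
      have "g' i * g' j = g i * g j + e * (g j - g i - e)" unfolding g'i g'j by (simp add: algebra_simps)
      moreover have "0 < e * (g j - g i - e)" using e0 e1 by simp
      ultimately show ?thesis by linarith
    qed
    have pp: "0 < g i * g j" using gpos by simp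
    have L3: "ln (g i * g j) < ln (g' i * g' j)"
      using ln_less_cancel_iff[of "g i * g j" "g' i * g' j"] prod pp by linarith
    have "(\<Sum>l\<in>UNIV. ln (g l)) < (\<Sum>l\<in>UNIV. ln (g' l))" using S L1 L2 L3 by linarith
    moreover have "rate_obj lam g = (1/2) * (\<Sum>l\<in>UNIV. ln (lam l)) - (1/2) * (\<Sum>l\<in>UNIV. ln (g l))"
      by (rule rate_alt[OF lp gpos])
    moreover have "rate_obj lam g' = (1/2) * (\<Sum>l\<in>UNIV. ln (lam l)) - (1/2) * (\<Sum>l\<in>UNIV. ln (g' l))"
      by (rule rate_alt[OF lp g'p])
    ultimately show False using r by linarith
  qed
  have "\<exists>i. g i < lam i"
  proof (rule ccontr)
    assume na: "\<not> (\<exists>i. g i < lam i)"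
    have "g l = lam l" for l
    proof -
      have "\<not> g l < lam l" using na by blast
      then show ?thesis using hb(2)[of l] by linarith
    qed
    then have gl: "g = lam" by auto
    have "optimal_noD lam P g lh" unfolding optimal_noD_def feasible_noD_def
    proof (intro conjI allI impI)
      show "box_ok lam g lh" "totP lam lh \<le> P" using bg cP by auto
      fix g' lh' assume "box_ok lam g' lh' \<and> totP lam lh' \<le> P"
      then show "rate_obj lam g \<le> rate_obj lam g'" using rate_nonneg[of lam g' lh'] rate_lam[of lam] gl by simp
    qed
    then show False using nD fe unfolding D_inactive_def by blast
  qed
  then obtain i0 where i0: "g i0 < lam i0" by blast
  have tight: "(\<Sum>l\<in>UNIV. g l) = D"
  proof (rule ccontr)
    assume "(\<Sum>l\<in>UNIV. g l) \<noteq> D"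
    then have lt: "(\<Sum>l\<in>UNIV. g l) < D" using sg cD by simp
    define e where "e = min (lam i0 - g i0) (D - (\<Sum>l\<in>UNIV. g l))"
    have e0: "0 < e" using i0 lt unfolding e_def by simp
    have e1: "e \<le> lam i0 - g i0" "e \<le> D - (\<Sum>l\<in>UNIV. g l)" unfolding e_def by auto
    define g' where "g' = g(i0 := g i0 + e)"
    have b': "\<forall>l. 0 < g' l \<and> g' l \<le> lam l" unfolding g'_def using hb e0 e1 by (auto simp: add_pos_pos)
    have "(\<Sum>l\<in>UNIV. g' l) = (\<Sum>l\<in>UNIV. g l) + e"
      using sum_upd[of "\<lambda>l a b. a" g i0 "g i0 + e" g "g i0"] unfolding g'_def by simp
    then have "feasible_noP lam D g' (\<lambda>l. lam l - g' l)" using modf b' e1 by simp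
    then have r: "rate_obj lam g \<le> rate_obj lam g'" by (rule noP)
    have "(\<Sum>l\<in>UNIV. ln (g' l)) = (\<Sum>l\<in>UNIV. ln (g l)) - ln (g i0) + ln (g i0 + e)"
      using sum_upd[of "\<lambda>l a b. ln a" g i0 "g i0 + e" g "g i0"] unfolding g'_def by simp
    moreover have "ln (g i0) < ln (g i0 + e)"
    proof -
      have a: "0 < g i0" using gpos by blast
      then have b: "0 < g i0 + e" using e0 by simp
      show ?thesis using a b e0 by simp
    qed
    ultimately have "(\<Sum>l\<in>UNIV. ln (g l)) < (\<Sum>l\<in>UNIV. ln (g' l))" by linarith
    moreover have g'p: "\<forall>l. 0 < g' l" using b' by blast
    moreover have "rate_obj lam g = (1/2) * (\<Sum>l\<in>UNIV. ln (lam l)) - (1/2) * (\<Sum>l\<in>UNIV. ln (g l))"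
      by (rule rate_alt[OF lp gpos])
    moreover have "rate_obj lam g' = (1/2) * (\<Sum>l\<in>UNIV. ln (lam l)) - (1/2) * (\<Sum>l\<in>UNIV. ln (g' l))"
      by (rule rate_alt[OF lp g'p])
    ultimately show False using r by linarith
  qed
  have "(\<Sum>l\<in>UNIV. Dl (lam l) (g l) (lh l) - g l) \<le> 0"
    using cD tight unfolding totD_def by (simp add: sum_subtractf)
  moreover have nn: "\<forall>l\<in>UNIV. 0 \<le> Dl (lam l) (g l) (lh l) - g l"
  proof
    fix l :: 'n show "0 \<le> Dl (lam l) (g l) (lh l) - g l" using Dl_ge[OF hb(3)[of l] hb(2)[of l]] by linarith
  qed
  moreover have "0 \<le> (\<Sum>l\<in>UNIV. Dl (lam l) (g l) (lh l) - g l)"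
    using nn by (intro sum_nonneg) blast
  ultimately have z: "(\<Sum>l\<in>UNIV. Dl (lam l) (g l) (lh l) - g l) = 0" by linarith
  have all0: "\<forall>l\<in>UNIV. Dl (lam l) (g l) (lh l) - g l = 0"
  proof -
    have nn': "\<And>l. l \<in> UNIV \<Longrightarrow> 0 \<le> Dl (lam l) (g l) (lh l) - g l" using nn by blast
    show ?thesis using sum_nonneg_eq_0_iff[OF finite_class.finite_UNIV nn'] z by (rule iffD1)
  qed
  have lhe: "lh l = lam l - g l" for l
  proof -
    have "Dl (lam l) (g l) (lh l) - g l = 0" using all0 by blast
    then have "(sqrt (lh l) - sqrt (lam l - g l))\<^sup>2 = 0" using Dl_eq[OF hb(3)[of l] hb(2)[of l]] by simp
    then have "sqrt (lh l) = sqrt (lam l - g l)" by simp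
    then show ?thesis by simp
  qed
  define c where "c = g i0"
  have c0: "0 < c" unfolding c_def using hb by simp
  have gmin: "g l = min c (lam l)" for l
  proof (cases "g l < lam l")
    case True
    then show ?thesis using W[OF True, of i0] W[OF i0, of l] hb[of l] unfolding c_def by simp
  next
    case False
    then show ?thesis using W[OF i0, of l] hb[of l] unfolding c_def by simp
  qed
  show ?thesis
  proof (intro exI conjI allI)
    show "0 < 1 / (2 * c)" using c0 by simp
    have cc: "1 / (2 * (1 / (2 * c))) = c" by simp
    show "g l = min (1 / (2 * (1 / (2 * c)))) (lam l)" for l using gmin cc by simp
    show "lh l = lam l - min (1 / (2 * (1 / (2 * c)))) (lam l)" for l using gmin lhe cc by simp
    have "(\<Sum>l\<in>UNIV. pos_part (lam l - c)) = (\<Sum>l\<in>UNIV. lam l - g l)"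
      by (rule sum.cong) (auto simp: pos_part_def gmin)
    also have "\<dots> = (\<Sum>l\<in>UNIV. lam l) - D" using tight by (simp add: sum_subtractf)
    finally have e: "(\<Sum>l\<in>UNIV. pos_part (lam l - c)) = (\<Sum>l\<in>UNIV. lam l) - D" .
    have "D \<le> (\<Sum>l\<in>UNIV. lam l)" unfolding tight[symmetric] by (rule sum_mono) (use hb in auto)
    then have pp: "pos_part ((\<Sum>l\<in>UNIV. lam l) - D) = (\<Sum>l\<in>UNIV. lam l) - D"
      unfolding pos_part_def by simp
    show "(\<Sum>l\<in>UNIV. pos_part (lam l - 1 / (2 * (1 / (2 * c))))) = pos_part ((\<Sum>l\<in>UNIV. lam l) - D)"
      unfolding cc pp by (rule e)
  qed
qed


theorem theorem6:
  fixes lam :: "'n::finite \<Rightarrow> real" and D P :: real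
    and g lh :: "'n \<Rightarrow> real"
  assumes lam_pos: "\<forall>l. 0 < lam l"
    and sf: "strictly_feasible lam D P"
    and opt: "optimal lam D P g lh"
  shows
    "(\<not> D_inactive lam D P \<and> \<not> P_inactive lam D P \<longrightarrow>
       (\<exists>nu1 nu2. 0 < nu1 \<and> 0 < nu2 \<and>
          (\<exists>\<theta>::'n \<Rightarrow> real. \<forall>l.
             theta_eq nu1 nu2 (lam l) (\<theta> l) \<and>
             (\<forall>t. theta_eq nu1 nu2 (lam l) t \<longrightarrow> t = \<theta> l) \<and>
             g l = \<theta> l / (2 * nu1) \<and>
             lh l = lam l / (1 + (1 - \<theta> l) * nu1 / nu2)\<^sup>2) \<and>
          totD lam g lh = D \<and> totP lam lh = P) \<and>
       (\<forall>l. g l < lam l))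
   \<and> (\<not> D_inactive lam D P \<and> P_inactive lam D P \<longrightarrow>
       (\<exists>nu1. 0 < nu1 \<and>
          (\<Sum>l\<in>UNIV. pos_part (lam l - 1 / (2 * nu1))) = pos_part ((\<Sum>l\<in>UNIV. lam l) - D) \<and>
          (\<forall>l. g l = min (1 / (2 * nu1)) (lam l) \<and>
               lh l = lam l - min (1 / (2 * nu1)) (lam l))))
   \<and> (D_inactive lam D P \<longrightarrow>
       (\<forall>l. g l = lam l) \<and>
       lh \<in> {x. totP lam x \<le> P \<and> (\<Sum>l\<in>UNIV. lam l + x l) \<le> D \<and> (\<forall>l. 0 \<le> x l)} \<and>
       (\<forall>x\<in>{x. totP lam x \<le> P \<and> (\<Sum>l\<in>UNIV. lam l + x l) \<le> D \<and> (\<forall>l. 0 \<le> x l)}.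
          optimal lam D P lam x))"
    apply (rule conjI)
   apply (rule impI, erule conjE, rule part1[OF lam_pos sf opt]; assumption)
  apply (rule conjI)
   apply (rule impI, erule conjE, rule part2[OF lam_pos sf opt]; assumption)
  apply (rule impI, rule part3[OF lam_pos sf opt]; assumption)
  done

end
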